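(* (1) For disjoint finite sets $X,Y$, $f\in\mathrm{Bool}(X)$, $g\in\mathrm{Bool}(Y)$: $f\star_1g$ is rigid iff $f$ and $g$ are rigid. (2) If $f\in\mathrm{Bool}(X)$ is rigid then $f_{\mid Y}$ is rigid for every $Y\subseteq X$. (3) If $f\in\mathrm{Bool}(X)$ is rigid and $\sim\in\mathcal{E}^W(f)$, then $f/{\sim}$ is rigid.
   Context: A boolean function on a finite set $X$ is a map $f:\mathcal{P}(X)\to\mathbb{Z}$ with $f(\emptyset)=0$; $\mathrm{Bool}(X)$ is their set; $f_{\mid Y}$ is the restriction to $\mathcal{P}(Y)$. For disjoint $X,Y$, $(f\star_1g)(A)=f(A\cap X)+g(A\cap Y)$ (associative, commutative, unit $1\in\mathrm{Bool}(\emptyset)$). For nonempty $X$, $f$ is indecomposable if $f=f'\star_1f''$ with $f'\in\mathrm{Bool}(X\setminus Y)$, $f''\in\mathrm{Bool}(Y)$ forces $Y\in\{\emptyset,X\}$. Each $f$ determines a unique equivalence $\sim_f^i$ with $f=\prod^{\star_1}_{Y\in X/\sim_f^i}f_{\mid Y}$ and each $f_{\mid Y}$ indecomposable; its classes are the indecomposable components of $f$ and $\mathrm{ic}(f)$ is their number. For an equivalence $\sim$: $\mathrm{cl}(\sim)=|X/{\sim}|$, $\varpi_\sim$ the canonical surjection, $f/{\sim}(A)=f(\varpi_\sim^{-1}(A))$, $(f\mid\sim)(A)=\sum_{Y\in X/\sim}f(A\cap Y)$; $\mathcal{E}^W(f)=\{\sim:\mathrm{ic}(f\mid\sim)=\mathrm{cl}(\sim)\}$.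 An indecomposable $f$ is rigid if for all disjoint $A,B\subseteq X$ with $f(A\sqcup B)=f(A)+f(B)$, one has $f(A'\sqcup B')=f(A')+f(B')$ for all $A'\subseteq A$, $B'\subseteq B$; a general $f$ is rigid if $f_{\mid Y}$ is rigid for each indecomposable component $Y$. *)

theory Defs
  imports Main
begin

text \<open>A boolean function on a finite set X is represented as a map f :: 'a set \<Rightarrow> int
  with f {} = 0; for uniqueness of representation we require f A = 0 whenever A is not a
  subset of X (so f is determined by its values on Pow X).\<close>

definition Bool :: "'a set \<Rightarrow> ('a set \<Rightarrow> int) \<Rightarrow> bool" where
  "Bool X f \<longleftrightarrow> f {} = 0 \<and> (\<forall>A. \<not> A \<subseteq> X \<longrightarrow> f A = 0)"

definition restr :: "('a set \<Rightarrow> int) \<Rightarrow> 'a set \<Rightarrow> ('a set \<Rightarrow> int)" where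
  "restr f Y = (\<lambda>A. if A \<subseteq> Y then f A else 0)"

definition star1 :: "'a set \<Rightarrow> 'a set \<Rightarrow> ('a set \<Rightarrow> int) \<Rightarrow> ('a set \<Rightarrow> int) \<Rightarrow> ('a set \<Rightarrow> int)" where
  "star1 X Y f g = (\<lambda>A. if A \<subseteq> X \<union> Y then f (A \<inter> X) + g (A \<inter> Y) else 0)"

definition indecomposable :: "'a set \<Rightarrow> ('a set \<Rightarrow> int) \<Rightarrow> bool" where
  "indecomposable X f \<longleftrightarrow> X \<noteq> {} \<and>
     (\<forall>Y f' f''. Y \<subseteq> X \<and> Bool (X - Y) f' \<and> Bool Y f'' \<and> f = star1 (X - Y) Y f' f''
        \<longrightarrow> Y = {} \<or> Y = X)"

text \<open>The equivalence \<sim>_f^i: the unique equivalence on X such that f is the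
  \<star>_1-product of its restrictions to the classes, each of them indecomposable.
  (The iterated \<star>_1-product over the classes, evaluated at A \<subseteq> X, is the sum
  of f(A \<inter> Y) over the classes Y.)\<close>
definition ic_rel :: "'a set \<Rightarrow> ('a set \<Rightarrow> int) \<Rightarrow> 'a rel" where
  "ic_rel X f = (THE r. equiv X r \<and>
      (\<forall>A. A \<subseteq> X \<longrightarrow> f A = (\<Sum>Y\<in>X // r. f (A \<inter> Y))) \<and>
      (\<forall>Y\<in>X // r. indecomposable Y (restr f Y)))"

definition ic_components :: "'a set \<Rightarrow> ('a set \<Rightarrow> int) \<Rightarrow> 'a set set" where
  "ic_components X f = X // ic_rel X f"

definition ic :: "'a set \<Rightarrow> ('a set \<Rightarrow> int) \<Rightarrow> nat" where
  "ic X f = card (ic_components X f)"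

definition cl :: "'a set \<Rightarrow> 'a rel \<Rightarrow> nat" where
  "cl X r = card (X // r)"

text \<open>f/\<sim>, a boolean function on X/\<sim>: (f/\<sim>)(A) = f(\<varpi>^{-1}(A)) = f(\<Union>A).\<close>
definition quot_fun :: "'a set \<Rightarrow> ('a set \<Rightarrow> int) \<Rightarrow> 'a rel \<Rightarrow> ('a set set \<Rightarrow> int)" where
  "quot_fun X f r = (\<lambda>A. if A \<subseteq> X // r then f (\<Union>A) else 0)"

definition bar_fun :: "'a set \<Rightarrow> ('a set \<Rightarrow> int) \<Rightarrow> 'a rel \<Rightarrow> ('a set \<Rightarrow> int)" where
  "bar_fun X f r = (\<lambda>A. if A \<subseteq> X then (\<Sum>Y\<in>X // r. f (A \<inter> Y)) else 0)"

definition EW :: "'a set \<Rightarrow> ('a set \<Rightarrow> int) \<Rightarrow> 'a rel set" where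
  "EW X f = {r. equiv X r \<and> ic X (bar_fun X f r) = cl X r}"

definition rigid_indec :: "'a set \<Rightarrow> ('a set \<Rightarrow> int) \<Rightarrow> bool" where
  "rigid_indec X f \<longleftrightarrow>
     (\<forall>A B. A \<subseteq> X \<and> B \<subseteq> X \<and> A \<inter> B = {} \<and> f (A \<union> B) = f A + f B \<longrightarrow>
        (\<forall>A' B'. A' \<subseteq> A \<and> B' \<subseteq> B \<longrightarrow> f (A' \<union> B') = f A' + f B'))"

definition rigid :: "'a set \<Rightarrow> ('a set \<Rightarrow> int) \<Rightarrow> bool" where
  "rigid X f \<longleftrightarrow> (\<forall>Y\<in>ic_components X f. rigid_indec Y (restr f Y))"

end

theory Submission
  imports Defs
begin


definition sep :: "'a set \<Rightarrow> ('a set \<Rightarrow> int) \<Rightarrow> 'a set \<Rightarrow> bool" where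
  "sep X f S \<longleftrightarrow> S \<subseteq> X \<and> (\<forall>A. A \<subseteq> X \<longrightarrow> f A = f (A \<inter> S) + f (A - S))"

definition atom :: "'a set \<Rightarrow> ('a set \<Rightarrow> int) \<Rightarrow> 'a set \<Rightarrow> bool" where
  "atom X f C \<longleftrightarrow> C \<noteq> {} \<and> sep X f C \<and> (\<forall>T. sep X f T \<and> T \<subseteq> C \<longrightarrow> T = {} \<or> T = C)"

definition RI :: "'a set \<Rightarrow> ('a set \<Rightarrow> int) \<Rightarrow> bool" where
  "RI C f \<longleftrightarrow> (\<forall>A B. A \<subseteq> C \<and> B \<subseteq> C \<and> A \<inter> B = {} \<and> f (A \<union> B) = f A + f B \<longrightarrow>
        (\<forall>A' B'. A' \<subseteq> A \<and> B' \<subseteq> B \<longrightarrow> f (A' \<union> B') = f A' + f B'))"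

lemma sep_Int:
  assumes "sep X f S" "sep X f T" shows "sep X f (S \<inter> T)"
proof -
  have "f A = f (A \<inter> (S \<inter> T)) + f (A - S \<inter> T)" if "A \<subseteq> X" for A
  proof -
    have 1: "f A = f (A \<inter> S) + f (A - S)" using assms(1) that unfolding sep_def by blast
    have "A \<inter> S \<subseteq> X" using that by blast
    then have 2: "f (A \<inter> S) = f (A \<inter> S \<inter> T) + f (A \<inter> S - T)" using assms(2) unfolding sep_def by blast
    have "A - S \<inter> T \<subseteq> X" using that by blast
    then have 3: "f (A - S \<inter> T) = f ((A - S \<inter> T) \<inter> S) + f ((A - S \<inter> T) - S)" using assms(1) unfolding sep_def by blast
    have e: "(A - S \<inter> T) \<inter> S = A \<inter> S - T" "(A - S \<inter> T) - S = A - S" "A \<inter> S \<inter> T = A \<inter> (S \<inter> T)" by blast+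
    show ?thesis using 1 2 3 unfolding e by simp
  qed
  then show ?thesis using assms unfolding sep_def by blast
qed

lemma sep_compl:
  assumes "sep X f S" shows "sep X f (X - S)"
proof -
  have "f A = f (A \<inter> (X - S)) + f (A - (X - S))" if "A \<subseteq> X" for A
  proof -
    have e: "A \<inter> (X - S) = A - S" "A - (X - S) = A \<inter> S" using that by blast+
    show ?thesis using assms that unfolding e sep_def by auto
  qed
  then show ?thesis unfolding sep_def by blast
qed

lemma sep_X: assumes "f {} = 0" shows "sep X f X"
proof -
  have "f A = f (A \<inter> X) + f (A - X)" if "A \<subseteq> X" for A
  proof -
    have "A \<inter> X = A" "A - X = {}" using that by blast+
    then show ?thesis using assms by (metis add_0_right)
  qed
  then show ?thesis unfolding sep_def by blast
qed

lemma sep_restrict: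
  assumes "sep X f S" "Y \<subseteq> X" shows "sep Y f (S \<inter> Y)"
proof -
  have "f A = f (A \<inter> (S \<inter> Y)) + f (A - S \<inter> Y)" if "A \<subseteq> Y" for A
  proof -
    have e: "A \<inter> (S \<inter> Y) = A \<inter> S" "A - S \<inter> Y = A - S" using that by blast+
    show ?thesis using assms that unfolding e sep_def by auto
  qed
  then show ?thesis unfolding sep_def by blast
qed

lemma sep_trans:
  assumes "sep S f T" "sep X f S" shows "sep X f T"
proof -
  have TS: "T \<subseteq> S" and SX: "S \<subseteq> X" using assms unfolding sep_def by auto
  have "f A = f (A \<inter> T) + f (A - T)" if "A \<subseteq> X" for A
  proof -
    have 1: "f A = f (A \<inter> S) + f (A - S)" using assms(2) that unfolding sep_def by blast
    have 2: "f (A \<inter> S) = f (A \<inter> S \<inter> T) + f (A \<inter> S - T)" using assms(1) unfolding sep_def by blast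
    have "A - T \<subseteq> X" using that by blast
    then have 3: "f (A - T) = f ((A - T) \<inter> S) + f (A - T - S)" using assms(2) unfolding sep_def by blast
    have e: "A \<inter> S \<inter> T = A \<inter> T" "(A - T) \<inter> S = A \<inter> S - T" "A - T - S = A - S" using TS by blast+
    show ?thesis using 1 2 3 unfolding e by simp
  qed
  then show ?thesis using TS SX unfolding sep_def by blast
qed

lemma sep_cong:
  assumes "\<And>A. A \<subseteq> X \<Longrightarrow> f A = g A" shows "sep X f S \<longleftrightarrow> sep X g S"
proof -
  have *: "(f A = f (A \<inter> S) + f (A - S)) \<longleftrightarrow> (g A = g (A \<inter> S) + g (A - S))" if "A \<subseteq> X" for A
  proof -
    have h: "A \<inter> S \<subseteq> X" "A - S \<subseteq> X" using that by blast+
    show ?thesis using assms[OF that] assms[OF h(1)] assms[OF h(2)] by simp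
  qed
  show ?thesis unfolding sep_def
  proof
    assume "S \<subseteq> X \<and> (\<forall>A. A \<subseteq> X \<longrightarrow> f A = f (A \<inter> S) + f (A - S))"
    then show "S \<subseteq> X \<and> (\<forall>A. A \<subseteq> X \<longrightarrow> g A = g (A \<inter> S) + g (A - S))" using * by simp
  next
    assume "S \<subseteq> X \<and> (\<forall>A. A \<subseteq> X \<longrightarrow> g A = g (A \<inter> S) + g (A - S))"
    then show "S \<subseteq> X \<and> (\<forall>A. A \<subseteq> X \<longrightarrow> f A = f (A \<inter> S) + f (A - S))" using * by simp
  qed
qed

lemma atom_cong:
  assumes "\<And>A. A \<subseteq> X \<Longrightarrow> f A = g A" shows "atom X f C \<longleftrightarrow> atom X g C"
  unfolding atom_def using sep_cong[of X f g, OF assms] by simp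

lemma RI_cong1:
  assumes "RI C f" "\<And>A. A \<subseteq> C \<Longrightarrow> f A = g A" shows "RI C g"
  unfolding RI_def
proof (intro allI impI)
  fix A B A' B'
  assume h: "A \<subseteq> C \<and> B \<subseteq> C \<and> A \<inter> B = {} \<and> g (A \<union> B) = g A + g B" and h2: "A' \<subseteq> A \<and> B' \<subseteq> B"
  have "f (A \<union> B) = f A + f B" using h assms(2)[of A] assms(2)[of B] assms(2)[of "A \<union> B"] by auto
  then have "f (A' \<union> B') = f A' + f B'" using assms(1)[unfolded RI_def, rule_format, of A B A' B'] h h2 by simp
  moreover have "A' \<subseteq> C" "B' \<subseteq> C" using h h2 by blast+
  ultimately show "g (A' \<union> B') = g A' + g B'"
    using assms(2)[of A'] assms(2)[of B'] assms(2)[of "A' \<union> B'"] by auto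
qed

lemma RI_cong:
  assumes "\<And>A. A \<subseteq> C \<Longrightarrow> f A = g A" shows "RI C f \<longleftrightarrow> RI C g"
proof
  assume "RI C f" then show "RI C g" using RI_cong1[of C f g] assms by blast
next
  have "\<And>A. A \<subseteq> C \<Longrightarrow> g A = f A" using assms by simp
  moreover assume "RI C g"
  ultimately show "RI C f" using RI_cong1[of C g f] by blast
qed

lemma RI_mono:
  assumes "RI C f" "W \<subseteq> C" shows "RI W f"
  unfolding RI_def
proof (intro allI impI)
  fix A B A' B'
  assume h: "A \<subseteq> W \<and> B \<subseteq> W \<and> A \<inter> B = {} \<and> f (A \<union> B) = f A + f B" and h2: "A' \<subseteq> A \<and> B' \<subseteq> B"
  have "A \<subseteq> C" "B \<subseteq> C" using h assms(2) by auto
  then show "f (A' \<union> B') = f A' + f B'"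
    using assms(1)[unfolded RI_def, rule_format, of A B A' B'] h h2 by simp
qed

lemma atom_subset: "atom X f C \<Longrightarrow> C \<subseteq> X"
  unfolding atom_def sep_def by blast

lemma atom_sep_cases:
  assumes "atom X f C" "sep X f S" shows "C \<subseteq> S \<or> C \<inter> S = {}"
proof -
  have "sep X f (C \<inter> S)" using assms sep_Int unfolding atom_def by blast
  then have "C \<inter> S = {} \<or> C \<inter> S = C" using assms unfolding atom_def by blast
  then show ?thesis by blast
qed

lemma atom_unique:
  assumes "atom X f C" "atom X f D" "x \<in> C" "x \<in> D" shows "C = D"
proof -
  have "C \<subseteq> D" using atom_sep_cases[OF assms(1)] assms unfolding atom_def by blast
  moreover have "D \<subseteq> C" using atom_sep_cases[OF assms(2)] assms unfolding atom_def by blast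
  ultimately show ?thesis by blast
qed

lemma atom_exists:
  assumes "finite X" "f {} = 0" "x \<in> X" shows "\<exists>C. atom X f C \<and> x \<in> C"
proof -
  let ?P = "\<lambda>S. sep X f S \<and> x \<in> S"
  have "?P X" using sep_X[of f X, OF assms(2)] assms(3) by blast
  then obtain S where PS: "?P S" and min: "\<And>S'. ?P S' \<Longrightarrow> card S \<le> card S'"
    using ex_has_least_nat[of ?P X card] by blast
  have SX: "S \<subseteq> X" using PS unfolding sep_def by blast
  have fS: "finite S" using SX assms(1) finite_subset by blast
  have "T = {} \<or> T = S" if T: "sep X f T" "T \<subseteq> S" for T
  proof (cases "x \<in> T")
    case True
    then have "card S \<le> card T" using min T by blast
    then show ?thesis using card_seteq[OF fS T(2)] by blast
  next
    case False
    have "sep X f (S \<inter> (X - T))" using sep_Int[OF _ sep_compl[OF T(1)]] PS by blast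
    moreover have "x \<in> S \<inter> (X - T)" using PS False assms(3) by blast
    ultimately have "card S \<le> card (S \<inter> (X - T))" using min by blast
    then have "S \<inter> (X - T) = S" using card_seteq[OF fS, of "S \<inter> (X - T)"] by blast
    then show ?thesis using T(2) by blast
  qed
  then have "atom X f S" using PS unfolding atom_def by blast
  then show ?thesis using PS by blast
qed

lemma atom_sub:
  assumes "sep Z h S" "C \<subseteq> S" shows "atom Z h C \<longleftrightarrow> atom S h C"
proof
  assume a: "atom Z h C"
  have "sep S h C" using sep_restrict[of Z h C S] a assms unfolding atom_def sep_def
    by (metis Int_absorb2)
  moreover have "T = {} \<or> T = C" if "sep S h T" "T \<subseteq> C" for T
    using sep_trans[OF that(1) assms(1)] that a unfolding atom_def by blast
  ultimately show "atom S h C" using a unfolding atom_def by blast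
next
  assume a: "atom S h C"
  have SZ: "S \<subseteq> Z" using assms unfolding sep_def by blast
  have "sep Z h C" using sep_trans[OF _ assms(1)] a unfolding atom_def by blast
  moreover have "T = {} \<or> T = C" if "sep Z h T" "T \<subseteq> C" for T
  proof -
    have "sep S h (T \<inter> S)" using sep_restrict[OF that(1) SZ] .
    moreover have "T \<inter> S = T" using that assms by blast
    ultimately show ?thesis using a that unfolding atom_def by auto
  qed
  ultimately show "atom Z h C" using a unfolding atom_def by blast
qed

lemma sep_sum:
  "finite P \<Longrightarrow> \<forall>C\<in>P. sep X f C \<Longrightarrow> \<forall>C\<in>P. \<forall>D\<in>P. C \<noteq> D \<longrightarrow> C \<inter> D = {} \<Longrightarrow> f {} = 0
   \<Longrightarrow> A \<subseteq> \<Union>P \<Longrightarrow> A \<subseteq> X \<Longrightarrow> f A = (\<Sum>C\<in>P. f (A \<inter> C))"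
proof (induction P arbitrary: A rule: finite_induct)
  case empty
  then show ?case by simp
next
  case (insert C P)
  have 1: "f A = f (A \<inter> C) + f (A - C)" using insert.prems unfolding sep_def by blast
  have p1: "\<forall>C\<in>P. sep X f C" using insert.prems(1) by blast
  have p2: "\<forall>C\<in>P. \<forall>D\<in>P. C \<noteq> D \<longrightarrow> C \<inter> D = {}" using insert.prems(2) by blast
  have p4: "A - C \<subseteq> \<Union>P" using insert.prems(4) by blast
  have p5: "A - C \<subseteq> X" using insert.prems(5) by blast
  have "f (A - C) = (\<Sum>D\<in>P. f ((A - C) \<inter> D))"
    by (rule insert.IH[OF p1 p2 insert.prems(3) p4 p5])
  also have "\<dots> = (\<Sum>D\<in>P. f (A \<inter> D))"
  proof (rule sum.cong)
    fix D assume "D \<in> P"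
    then have "D \<in> insert C P" by simp
    moreover have "C \<noteq> D" using insert.hyps(2) \<open>D \<in> P\<close> by blast
    ultimately have "C \<inter> D = {}" using insert.prems(2) by blast
    then have "(A - C) \<inter> D = A \<inter> D" by blast
    then show "f ((A - C) \<inter> D) = f (A \<inter> D)" by simp
  qed simp
  finally show ?case using 1 insert.hyps by simp
qed



definition Rel :: "'a set \<Rightarrow> ('a set \<Rightarrow> int) \<Rightarrow> 'a rel" where
  "Rel X f = {(x, y). x \<in> X \<and> y \<in> X \<and> (\<exists>C. atom X f C \<and> x \<in> C \<and> y \<in> C)}"

lemma Rel_equiv:
  assumes "finite X" "f {} = 0" shows "equiv X (Rel X f)"
proof (rule equivI)
  show "Rel X f \<subseteq> X \<times> X" unfolding Rel_def by auto
  show "refl_on X (Rel X f)" unfolding refl_on_def Rel_def using atom_exists[of X f, OF assms] by auto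
  show "sym (Rel X f)" unfolding sym_def Rel_def by auto
  show "trans (Rel X f)" unfolding trans_def
  proof (intro allI impI)
    fix x y z assume h: "(x, y) \<in> Rel X f" "(y, z) \<in> Rel X f"
    obtain C where C: "atom X f C" "x \<in> C" "y \<in> C" using h(1) unfolding Rel_def by auto
    obtain D where D: "atom X f D" "y \<in> D" "z \<in> D" using h(2) unfolding Rel_def by auto
    have "C = D" using atom_unique[OF C(1) D(1) C(3) D(2)] .
    then show "(x, z) \<in> Rel X f" using h C D unfolding Rel_def by auto
  qed
qed

lemma Rel_class:
  assumes "atom X f C" "x \<in> C" shows "Rel X f `` {x} = C"
proof -
  have CX: "C \<subseteq> X" using atom_subset[OF assms(1)] .
  show ?thesis
  proof
    show "Rel X f `` {x} \<subseteq> C"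
    proof
      fix y assume "y \<in> Rel X f `` {x}"
      then obtain D where D: "atom X f D" "x \<in> D" "y \<in> D" unfolding Rel_def by auto
      have "D = C" using atom_unique[OF D(1) assms(1) D(2) assms(2)] .
      then show "y \<in> C" using D by simp
    qed
    show "C \<subseteq> Rel X f `` {x}" using assms CX unfolding Rel_def by auto
  qed
qed

lemma Rel_quot:
  assumes "finite X" "f {} = 0" shows "X // Rel X f = {C. atom X f C}"
proof
  show "X // Rel X f \<subseteq> {C. atom X f C}"
  proof
    fix Y assume "Y \<in> X // Rel X f"
    then obtain x where x: "x \<in> X" "Y = Rel X f `` {x}" by (auto elim: quotientE)
    obtain C where C: "atom X f C" "x \<in> C" using atom_exists[of X f, OF assms x(1)] by blast
    show "Y \<in> {C. atom X f C}" using Rel_class[OF C] x C by simp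
  qed
  show "{C. atom X f C} \<subseteq> X // Rel X f"
  proof
    fix C assume "C \<in> {C. atom X f C}"
    then have C: "atom X f C" by simp
    then obtain x where x: "x \<in> C" unfolding atom_def by blast
    have "x \<in> X" using atom_subset[OF C] x by blast
    then have "Rel X f `` {x} \<in> X // Rel X f" by (rule quotientI)
    then show "C \<in> X // Rel X f" using Rel_class[OF C x] by simp
  qed
qed

lemma atoms_finite: "finite X \<Longrightarrow> finite {C. atom X f C}"
  by (rule finite_subset[of _ "Pow X"]) (auto dest: atom_subset)

lemma split_star:
  assumes "sep D f C" shows "restr f D = star1 (D - C) C (restr f (D - C)) (restr f C)"
proof
  fix A
  have CD: "C \<subseteq> D" using assms unfolding sep_def by blast
  then have U: "(D - C) \<union> C = D" by blast
  show "restr f D A = star1 (D - C) C (restr f (D - C)) (restr f C) A"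
  proof (cases "A \<subseteq> D")
    case True
    have e: "A \<inter> (D - C) = A - C" using True by blast
    have "f A = f (A \<inter> C) + f (A - C)" using assms True unfolding sep_def by blast
    then show ?thesis using True unfolding restr_def star1_def U e by auto
  next
    case False
    then show ?thesis unfolding restr_def star1_def U by auto
  qed
qed

lemma class_of:
  assumes "equiv X r" "Y \<in> X // r" "x \<in> Y" shows "r `` {x} = Y"
proof -
  obtain y where y: "y \<in> X" "Y = r `` {y}" using assms(2) by (auto elim: quotientE)
  have "(y, x) \<in> r" using assms(3) y by simp
  then have "r `` {y} = r `` {x}" using equiv_class_eq[OF assms(1)] by blast
  then show ?thesis using y by simp
qed

lemma class_sep:
  assumes fin: "finite X" and eq: "equiv X r" and f0: "f {} = 0"
    and sum: "\<forall>A. A \<subseteq> X \<longrightarrow> f A = (\<Sum>Y\<in>X // r. f (A \<inter> Y))"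
    and D: "D \<in> X // r"
  shows "sep X f D"
proof -
  have DX: "D \<subseteq> X" using in_quotient_imp_subset[OF eq D] .
  have finQ: "finite (X // r)" using finite_quotient[OF fin equiv_type[OF eq]] .
  have "f A = f (A \<inter> D) + f (A - D)" if A: "A \<subseteq> X" for A
  proof -
    have 1: "f A = f (A \<inter> D) + (\<Sum>Y\<in>X // r - {D}. f (A \<inter> Y))"
      using sum A sum.remove[OF finQ D, of "\<lambda>Y. f (A \<inter> Y)"] by simp
    have "A - D \<subseteq> X" using A by blast
    then have "f (A - D) = (\<Sum>Y\<in>X // r. f ((A - D) \<inter> Y))" using sum by blast
    also have "\<dots> = f ((A - D) \<inter> D) + (\<Sum>Y\<in>X // r - {D}. f ((A - D) \<inter> Y))"
      using sum.remove[OF finQ D, of "\<lambda>Y. f ((A - D) \<inter> Y)"] by simp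
    also have "\<dots> = (\<Sum>Y\<in>X // r - {D}. f (A \<inter> Y))"
    proof -
      have "(A - D) \<inter> D = {}" by blast
      moreover have "(\<Sum>Y\<in>X // r - {D}. f ((A - D) \<inter> Y)) = (\<Sum>Y\<in>X // r - {D}. f (A \<inter> Y))"
      proof (rule sum.cong)
        fix Y assume Y: "Y \<in> X // r - {D}"
        then have "Y \<inter> D = {}" using quotient_disj[OF eq, of Y D] D by blast
        then have "(A - D) \<inter> Y = A \<inter> Y" by blast
        then show "f ((A - D) \<inter> Y) = f (A \<inter> Y)" by simp
      qed simp
      ultimately show ?thesis using f0 by simp
    qed
    finally show ?thesis using 1 by simp
  qed
  then show ?thesis using DX unfolding sep_def by blast
qed

lemma atom_indec:
  assumes at: "atom X f C" and f0: "f {} = 0"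
  shows "indecomposable C (restr f C)"
  unfolding indecomposable_def
proof (intro conjI allI impI)
  show "C \<noteq> {}" using at unfolding atom_def by blast
  fix T f' f''
  assume h: "T \<subseteq> C \<and> Bool (C - T) f' \<and> Bool T f'' \<and> restr f C = star1 (C - T) T f' f''"
  have TC: "T \<subseteq> C" using h by blast
  have f'0: "f' {} = 0" and f''0: "f'' {} = 0" using h unfolding Bool_def by auto
  have U: "(C - T) \<union> T = C" using TC by blast
  have ev: "f B = f' (B \<inter> (C - T)) + f'' (B \<inter> T)" if "B \<subseteq> C" for B
  proof -
    have "restr f C B = star1 (C - T) T f' f'' B" using h by simp
    then show ?thesis using that unfolding restr_def star1_def U by simp
  qed
  have "sep C f T"
  proof -
    have "f A = f (A \<inter> T) + f (A - T)" if A: "A \<subseteq> C" for A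
    proof -
      have a1: "A \<inter> T \<subseteq> C" "A - T \<subseteq> C" using A by blast+
      have e: "(A \<inter> T) \<inter> (C - T) = {}" "(A \<inter> T) \<inter> T = A \<inter> T"
        "(A - T) \<inter> (C - T) = A \<inter> (C - T)" "(A - T) \<inter> T = {}" using A by blast+
      have "f (A \<inter> T) = f'' (A \<inter> T)" using ev[OF a1(1)] e f'0 by simp
      moreover have "f (A - T) = f' (A \<inter> (C - T))" using ev[OF a1(2)] e f''0 by simp
      ultimately show ?thesis using ev[OF A] by simp
    qed
    then show ?thesis using TC unfolding sep_def by blast
  qed
  then have "sep X f T" using sep_trans at unfolding atom_def by blast
  then show "T = {} \<or> T = C" using at TC unfolding atom_def by blast
qed

lemma Rel_unique:
  assumes fin: "finite X" and f0: "f {} = 0" and eq: "equiv X r"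
    and sum: "\<forall>A. A \<subseteq> X \<longrightarrow> f A = (\<Sum>Y\<in>X // r. f (A \<inter> Y))"
    and ind: "\<forall>Y\<in>X // r. indecomposable Y (restr f Y)"
  shows "r = Rel X f"
proof -
  have key: "r `` {x} = C" if x: "x \<in> X" and C: "atom X f C" "x \<in> C" for x C
  proof -
    let ?D = "r `` {x}"
    have DQ: "?D \<in> X // r" using x by (rule quotientI)
    have xD: "x \<in> ?D" using equiv_class_self[OF eq x] .
    have Dsep: "sep X f ?D" using class_sep[OF fin eq f0 sum DQ] .
    have CD: "C \<subseteq> ?D" using atom_sep_cases[OF C(1) Dsep] C(2) xD by blast
    have DX: "?D \<subseteq> X" using in_quotient_imp_subset[OF eq DQ] .
    have "sep ?D f (C \<inter> ?D)" using sep_restrict[OF _ DX] C(1) unfolding atom_def by blast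
    then have CsepD: "sep ?D f C" using CD by (simp add: Int_absorb2)
    have sp: "restr f ?D = star1 (?D - C) C (restr f (?D - C)) (restr f C)" using split_star[OF CsepD] .
    have B1: "Bool (?D - C) (restr f (?D - C))" "Bool C (restr f C)" unfolding Bool_def restr_def using f0 by auto
    have "indecomposable ?D (restr f ?D)" using ind DQ by blast
    then have "C = {} \<or> C = ?D" unfolding indecomposable_def using CD B1 sp by blast
    then show ?thesis using C(2) by blast
  qed
  show ?thesis
  proof (rule set_eqI)
    fix p :: "'a \<times> 'a"
    obtain x y where p: "p = (x, y)" by (cases p)
    show "p \<in> r \<longleftrightarrow> p \<in> Rel X f"
    proof
      assume "p \<in> r"
      then have xy: "(x, y) \<in> r" using p by simp
      then have xX: "x \<in> X" and yX: "y \<in> X" using equiv_type[OF eq] by auto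
      obtain C where C: "atom X f C" "x \<in> C" using atom_exists[of X f, OF fin f0 xX] by blast
      have "y \<in> C" using key[OF xX C] xy by blast
      then show "p \<in> Rel X f" using p xX yX C unfolding Rel_def by blast
    next
      assume "p \<in> Rel X f"
      then obtain C where xX: "x \<in> X" and C: "atom X f C" "x \<in> C" "y \<in> C"
        using p unfolding Rel_def by blast
      have "y \<in> r `` {x}" using key[OF xX C(1,2)] C(3) by simp
      then show "p \<in> r" using p by simp
    qed
  qed
qed

lemma ic_rel_eq:
  assumes fin: "finite X" and f0: "f {} = 0" shows "ic_rel X f = Rel X f"
  unfolding ic_rel_def
proof (rule the_equality)
  have eq: "equiv X (Rel X f)" by (rule Rel_equiv[of X f, OF fin f0])
  have Q: "X // Rel X f = {C. atom X f C}" by (rule Rel_quot[of X f, OF fin f0])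
  have sum: "\<forall>A. A \<subseteq> X \<longrightarrow> f A = (\<Sum>Y\<in>X // Rel X f. f (A \<inter> Y))"
  proof (intro allI impI)
    fix A assume A: "A \<subseteq> X"
    have cov: "A \<subseteq> \<Union>{C. atom X f C}"
    proof
      fix x assume "x \<in> A"
      then obtain C where "atom X f C" "x \<in> C" using atom_exists[of X f, OF fin f0] A by blast
      then show "x \<in> \<Union>{C. atom X f C}" by blast
    qed
    have sp: "\<forall>C\<in>{C. atom X f C}. sep X f C" unfolding atom_def by blast
    have dj: "\<forall>C\<in>{C. atom X f C}. \<forall>D\<in>{C. atom X f C}. C \<noteq> D \<longrightarrow> C \<inter> D = {}"
    proof (intro ballI impI)
      fix C D assume CD: "C \<in> {C. atom X f C}" "D \<in> {C. atom X f C}" "C \<noteq> D"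
      show "C \<inter> D = {}"
      proof (rule ccontr)
        assume "C \<inter> D \<noteq> {}"
        then obtain x where "x \<in> C" "x \<in> D" by blast
        then have "C = D" using atom_unique[of X f C D x] CD by simp
        then show False using CD by simp
      qed
    qed
    show "f A = (\<Sum>Y\<in>X // Rel X f. f (A \<inter> Y))"
      unfolding Q by (rule sep_sum[OF atoms_finite[OF fin] sp dj f0 cov A])
  qed
  have ind: "\<forall>Y\<in>X // Rel X f. indecomposable Y (restr f Y)"
    unfolding Q using atom_indec f0 by blast
  show "equiv X (Rel X f) \<and> (\<forall>A. A \<subseteq> X \<longrightarrow> f A = (\<Sum>Y\<in>X // Rel X f. f (A \<inter> Y))) \<and>
      (\<forall>Y\<in>X // Rel X f. indecomposable Y (restr f Y))" using eq sum ind by blast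
next
  fix r
  assume "equiv X r \<and> (\<forall>A. A \<subseteq> X \<longrightarrow> f A = (\<Sum>Y\<in>X // r. f (A \<inter> Y))) \<and>
      (\<forall>Y\<in>X // r. indecomposable Y (restr f Y))"
  then show "r = Rel X f" using Rel_unique[of X f, OF fin f0] by blast
qed

lemma ic_components_eq:
  assumes "finite X" "f {} = 0" shows "ic_components X f = {C. atom X f C}"
  unfolding ic_components_def ic_rel_eq[of X f, OF assms] Rel_quot[of X f, OF assms] ..

lemma rigid_indec_RI: "rigid_indec C (restr f C) \<longleftrightarrow> RI C f"
proof -
  have "rigid_indec C (restr f C) \<longleftrightarrow> RI C (restr f C)" unfolding rigid_indec_def RI_def ..
  also have "\<dots> \<longleftrightarrow> RI C f" by (rule RI_cong) (simp add: restr_def)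
  finally show ?thesis .
qed

lemma rigid_iff:
  assumes "finite X" "f {} = 0" shows "rigid X f \<longleftrightarrow> (\<forall>C. atom X f C \<longrightarrow> RI C f)"
  unfolding rigid_def ic_components_eq[of X f, OF assms] rigid_indec_RI by simp



lemma part2:
  assumes fin: "finite X" and B: "Bool X f" and rg: "rigid X f" and YX: "Y \<subseteq> X"
  shows "rigid Y (restr f Y)"
proof -
  have f0: "f {} = 0" using B unfolding Bool_def by blast
  have finY: "finite Y" using fin YX finite_subset by blast
  have g0: "restr f Y {} = 0" by (simp add: restr_def f0)
  have agree: "\<And>A. A \<subseteq> Y \<Longrightarrow> restr f Y A = f A" by (simp add: restr_def)
  have RIX: "\<And>C. atom X f C \<Longrightarrow> RI C f" using rg rigid_iff[of X f, OF fin f0] by blast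
  show ?thesis unfolding rigid_iff[of Y "restr f Y", OF finY g0]
  proof (intro allI impI)
    fix W assume "atom Y (restr f Y) W"
    then have W: "atom Y f W" using atom_cong[of Y "restr f Y" f, OF agree] by simp
    obtain x where x: "x \<in> W" using W unfolding atom_def by blast
    have WY: "W \<subseteq> Y" using atom_subset[OF W] .
    have xX: "x \<in> X" using WY x YX by blast
    obtain C where C: "atom X f C" "x \<in> C" using atom_exists[of X f, OF fin f0 xX] by blast
    have "sep Y f (C \<inter> Y)" using sep_restrict[OF _ YX] C(1) unfolding atom_def by blast
    then have "W \<subseteq> C \<inter> Y" using atom_sep_cases[OF W] x C(2) WY by blast
    then have "RI W f" using RI_mono[OF RIX[OF C(1)]] by blast
    moreover have "\<And>A. A \<subseteq> W \<Longrightarrow> f A = restr f Y A" using WY by (auto simp: restr_def)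
    ultimately show "RI W (restr f Y)" using RI_cong[of W f "restr f Y"] by blast
  qed
qed

lemma part1:
  assumes finX: "finite X" and finY: "finite Y" and dj: "X \<inter> Y = {}" and BX: "Bool X f" and BY: "Bool Y g"
  shows "rigid (X \<union> Y) (star1 X Y f g) \<longleftrightarrow> rigid X f \<and> rigid Y g"
proof -
  define h where "h = star1 X Y f g"
  have f0: "f {} = 0" using BX unfolding Bool_def by blast
  have g0: "g {} = 0" using BY unfolding Bool_def by blast
  have hX: "h A = f A" if "A \<subseteq> X" for A
  proof -
    have "A \<inter> X = A" "A \<inter> Y = {}" "A \<subseteq> X \<union> Y" using that dj by blast+
    then show ?thesis unfolding h_def star1_def using g0 by simp
  qed
  have hY: "h A = g A" if "A \<subseteq> Y" for A
  proof -
    have "A \<inter> Y = A" "A \<inter> X = {}" "A \<subseteq> X \<union> Y" using that dj by blast+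
    then show ?thesis unfolding h_def star1_def using f0 by simp
  qed
  have h0: "h {} = 0" using hX[of "{}"] f0 by simp
  have fin: "finite (X \<union> Y)" using finX finY by simp
  have sepX: "sep (X \<union> Y) h X"
  proof -
    have "h A = h (A \<inter> X) + h (A - X)" if A: "A \<subseteq> X \<union> Y" for A
    proof -
      have 1: "h A = f (A \<inter> X) + g (A \<inter> Y)" using A unfolding h_def star1_def by simp
      have "A - X \<subseteq> Y" "A - X = A \<inter> Y" using A dj by blast+
      then have "h (A - X) = g (A \<inter> Y)" using hY by metis
      moreover have "h (A \<inter> X) = f (A \<inter> X)" using hX by simp
      ultimately show ?thesis using 1 by simp
    qed
    then show ?thesis unfolding sep_def by blast
  qed
  have XYX: "X \<union> Y - X = Y" using dj by blast
  have sepY: "sep (X \<union> Y) h Y" using sep_compl[OF sepX] unfolding XYX .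
  have atoms: "atom (X \<union> Y) h C \<longleftrightarrow> atom X f C \<or> atom Y g C" for C
  proof
    assume a: "atom (X \<union> Y) h C"
    have CXY: "C \<subseteq> X \<union> Y" using atom_subset[OF a] .
    show "atom X f C \<or> atom Y g C"
    proof (cases "C \<subseteq> X")
      case True
      then have "atom X h C" using atom_sub[OF sepX True] a by simp
      then show ?thesis using atom_cong[of X h f C] hX by simp
    next
      case False
      then have "C \<inter> X = {}" using atom_sep_cases[OF a sepX] by blast
      then have CY: "C \<subseteq> Y" using CXY by blast
      then have "atom Y h C" using atom_sub[OF sepY CY] a by simp
      then show ?thesis using atom_cong[of Y h g C] hY by simp
    qed
  next
    assume "atom X f C \<or> atom Y g C"
    then show "atom (X \<union> Y) h C"
    proof
      assume "atom X f C"
      then have a: "atom X h C" using atom_cong[of X h f C] hX by simp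
      show ?thesis using atom_sub[OF sepX atom_subset[OF a]] a by simp
    next
      assume "atom Y g C"
      then have a: "atom Y h C" using atom_cong[of Y h g C] hY by simp
      show ?thesis using atom_sub[OF sepY atom_subset[OF a]] a by simp
    qed
  qed
  have RIX: "atom X f C \<Longrightarrow> RI C h \<longleftrightarrow> RI C f" for C
    using RI_cong[of C h f] hX atom_subset[of X f C] by blast
  have RIY: "atom Y g C \<Longrightarrow> RI C h \<longleftrightarrow> RI C g" for C
    using RI_cong[of C h g] hY atom_subset[of Y g C] by blast
  have "rigid (X \<union> Y) h \<longleftrightarrow> (\<forall>C. atom (X \<union> Y) h C \<longrightarrow> RI C h)"
    by (rule rigid_iff[of "X \<union> Y" h, OF fin h0])
  also have "\<dots> \<longleftrightarrow> (\<forall>C. atom X f C \<longrightarrow> RI C f) \<and> (\<forall>C. atom Y g C \<longrightarrow> RI C g)"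
    unfolding atoms using RIX RIY by blast
  also have "\<dots> \<longleftrightarrow> rigid X f \<and> rigid Y g"
    using rigid_iff[of X f, OF finX f0] rigid_iff[of Y g, OF finY g0] by simp
  finally show ?thesis unfolding h_def .
qed



lemma image_class:
  assumes eq: "equiv X r" and Y: "Y \<in> X // r" and CY: "C \<subseteq> Y" and C: "C \<noteq> {}"
  shows "r `` C = Y"
proof
  show "r `` C \<subseteq> Y"
  proof
    fix z assume "z \<in> r `` C"
    then obtain c where c: "c \<in> C" "(c, z) \<in> r" by blast
    have "r `` {c} = Y" using class_of[OF eq Y] c CY by blast
    then show "z \<in> Y" using c by blast
  qed
  obtain c where c: "c \<in> C" using C by blast
  have "r `` {c} = Y" using class_of[OF eq Y] c CY by blast
  then show "Y \<subseteq> r `` C" using c by blast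
qed

lemma part3:
  assumes fin: "finite X" and B: "Bool X f" and rg: "rigid X f" and EWr: "r \<in> EW X f"
  shows "rigid (X // r) (quot_fun X f r)"
proof -
  have f0: "f {} = 0" using B unfolding Bool_def by blast
  have eq: "equiv X r" and icq: "ic X (bar_fun X f r) = cl X r" using EWr unfolding EW_def by auto
  define g where "g = bar_fun X f r"
  define Q where "Q = X // r"
  have finQ: "finite Q" unfolding Q_def using finite_quotient[OF fin equiv_type[OF eq]] .
  have QX: "\<And>Y. Y \<in> Q \<Longrightarrow> Y \<subseteq> X" unfolding Q_def using in_quotient_imp_subset[OF eq] .
  have Qne: "\<And>Y. Y \<in> Q \<Longrightarrow> Y \<noteq> {}" unfolding Q_def using in_quotient_imp_non_empty[OF eq] .
  have Qdisj: "\<And>Y Y'. Y \<in> Q \<Longrightarrow> Y' \<in> Q \<Longrightarrow> Y \<noteq> Y' \<Longrightarrow> Y \<inter> Y' = {}"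
    unfolding Q_def using quotient_disj[OF eq] by blast
  have g0: "g {} = 0" unfolding g_def bar_fun_def using f0 by simp
  have gY: "g A = f A" if Y: "Y \<in> Q" and A: "A \<subseteq> Y" for Y A
  proof -
    have AX: "A \<subseteq> X" using QX[OF Y] A by blast
    have "g A = (\<Sum>Y'\<in>Q. f (A \<inter> Y'))" unfolding g_def bar_fun_def Q_def using AX by simp
    also have "\<dots> = f (A \<inter> Y) + (\<Sum>Y'\<in>Q - {Y}. f (A \<inter> Y'))"
      using sum.remove[OF finQ Y, of "\<lambda>Y'. f (A \<inter> Y')"] by simp
    also have "(\<Sum>Y'\<in>Q - {Y}. f (A \<inter> Y')) = 0"
    proof (rule sum.neutral, rule ballI)
      fix Y' assume "Y' \<in> Q - {Y}"
      then have "Y \<inter> Y' = {}" using Qdisj[OF Y, of Y'] by blast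
      then have "A \<inter> Y' = {}" using A by blast
      then show "f (A \<inter> Y') = 0" using f0 by simp
    qed
    finally show ?thesis using A by (simp add: Int_absorb2)
  qed
  have gsum: "\<forall>A. A \<subseteq> X \<longrightarrow> g A = (\<Sum>Y\<in>X // r. g (A \<inter> Y))"
  proof (intro allI impI)
    fix A assume AX: "A \<subseteq> X"
    have "g A = (\<Sum>Y\<in>Q. f (A \<inter> Y))" unfolding g_def bar_fun_def Q_def using AX by simp
    also have "\<dots> = (\<Sum>Y\<in>Q. g (A \<inter> Y))"
      by (rule sum.cong) (auto intro: gY[symmetric])
    finally show "g A = (\<Sum>Y\<in>X // r. g (A \<inter> Y))" unfolding Q_def .
  qed
  have sepQ: "sep X g Y" if "Y \<in> Q" for Y
    using class_sep[OF fin eq g0 gsum] that unfolding Q_def by blast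
  have atom_in: "C \<subseteq> Y" if C: "atom X g C" and Y: "Y \<in> Q" and x: "x \<in> C" "x \<in> Y" for C Y x
    using atom_sep_cases[OF C sepQ[OF Y]] x by blast
  define At where "At = {C. atom X g C}"
  have finAt: "finite At" unfolding At_def using atoms_finite[OF fin] .
  have phi: "r `` C \<in> Q \<and> C \<subseteq> r `` C" if C: "C \<in> At" for C
  proof -
    have a: "atom X g C" using C unfolding At_def by simp
    obtain x where x: "x \<in> C" using a unfolding atom_def by blast
    have xX: "x \<in> X" using atom_subset[OF a] x by blast
    have Y: "r `` {x} \<in> Q" unfolding Q_def using xX by (rule quotientI)
    have xY: "x \<in> r `` {x}" using equiv_class_self[OF eq xX] .
    have CY: "C \<subseteq> r `` {x}" using atom_in[OF a Y x xY] .
    have "r `` C = r `` {x}" using image_class[OF eq Y[unfolded Q_def] CY] x by blast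
    then show ?thesis using Y CY by simp
  qed
  have img: "(\<lambda>C. r `` C) ` At = Q"
  proof
    show "(\<lambda>C. r `` C) ` At \<subseteq> Q" using phi by blast
    show "Q \<subseteq> (\<lambda>C. r `` C) ` At"
    proof
      fix Y assume Y: "Y \<in> Q"
      obtain y where y: "y \<in> Y" using Qne[OF Y] by blast
      have yX: "y \<in> X" using QX[OF Y] y by blast
      obtain C where C: "atom X g C" "y \<in> C" using atom_exists[of X g, OF fin g0 yX] by blast
      have CY: "C \<subseteq> Y" using atom_in[OF C(1) Y C(2) y] .
      have "r `` C = Y" using image_class[OF eq Y[unfolded Q_def] CY] C(2) by blast
      then show "Y \<in> (\<lambda>C. r `` C) ` At" using C(1) unfolding At_def by blast
    qed
  qed
  have icA: "ic_components X g = At" using ic_components_eq[of X g, OF fin g0] unfolding At_def .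
  have "card At = card Q" using icq[folded g_def] icA unfolding ic_def cl_def Q_def by simp
  then have "card ((\<lambda>C. r `` C) ` At) = card At" using img by simp
  then have inj: "inj_on (\<lambda>C. r `` C) At" by (rule eq_card_imp_inj_on[OF finAt])
  have Qatom: "atom X g Y" if Y: "Y \<in> Q" for Y
  proof -
    obtain y where y: "y \<in> Y" using Qne[OF Y] by blast
    have yX: "y \<in> X" using QX[OF Y] y by blast
    obtain C where C: "atom X g C" "y \<in> C" using atom_exists[of X g, OF fin g0 yX] by blast
    have CY: "C \<subseteq> Y" using atom_in[OF C(1) Y C(2) y] .
    have rC: "r `` C = Y" using image_class[OF eq Y[unfolded Q_def] CY] C(2) by blast
    have "Y \<subseteq> C"
    proof
      fix z assume z: "z \<in> Y"
      have zX: "z \<in> X" using QX[OF Y] z by blast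
      obtain C' where C': "atom X g C'" "z \<in> C'" using atom_exists[of X g, OF fin g0 zX] by blast
      have C'Y: "C' \<subseteq> Y" using atom_in[OF C'(1) Y C'(2) z] .
      have "r `` C' = Y" using image_class[OF eq Y[unfolded Q_def] C'Y] C'(2) by blast
      then have "C' = C" using inj rC C C' unfolding inj_on_def At_def by auto
      then show "z \<in> C" using C' by simp
    qed
    then have "C = Y" using CY by blast
    then show ?thesis using C by simp
  qed
  have indecY: "T = {} \<or> T = Y" if Y: "Y \<in> Q" and T: "sep Y f T" "T \<subseteq> Y" for Y T
  proof -
    have "atom Y g Y" using atom_sub[OF sepQ[OF Y], of Y] Qatom[OF Y] by simp
    then have "atom Y f Y" using atom_cong[of Y g f Y] gY[OF Y] by simp
    then show ?thesis using T unfolding atom_def by blast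
  qed
  have dich: "Y \<subseteq> C \<or> C \<inter> Y = {}" if C: "atom X f C" and Y: "Y \<in> Q" for C Y
  proof -
    have "sep Y f (C \<inter> Y)" using sep_restrict[OF _ QX[OF Y]] C unfolding atom_def by blast
    then have "C \<inter> Y = {} \<or> C \<inter> Y = Y" using indecY[OF Y] by blast
    then show ?thesis by blast
  qed
  define F where "F = quot_fun X f r"
  have Fdef: "F A = f (\<Union>A)" if "A \<subseteq> Q" for A
    using that unfolding F_def quot_fun_def Q_def by simp
  have F0: "F {} = 0" using Fdef[of "{}"] f0 by simp
  have RIf: "\<And>C. atom X f C \<Longrightarrow> RI C f" using rg rigid_iff[of X f, OF fin f0] by blast
  have "\<forall>Z. atom Q F Z \<longrightarrow> RI Z F"
  proof (intro allI impI)
    fix Z assume atZ: "atom Q F Z"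
    have ZQ: "Z \<subseteq> Q" using atom_subset[OF atZ] .
    obtain Y where YZ: "Y \<in> Z" using atZ unfolding atom_def by blast
    have Y: "Y \<in> Q" using ZQ YZ by blast
    obtain y where y: "y \<in> Y" using Qne[OF Y] by blast
    have yX: "y \<in> X" using QX[OF Y] y by blast
    obtain C where C: "atom X f C" "y \<in> C" using atom_exists[of X f, OF fin f0 yX] by blast
    define CC where "CC = {Y' \<in> Q. Y' \<subseteq> C}"
    have sepC: "sep X f C" using C(1) unfolding atom_def by blast
    have YCC: "Y \<in> CC" using dich[OF C(1) Y] y C(2) Y unfolding CC_def by blast
    have sepCC: "sep Q F CC"
    proof -
      have "F A = F (A \<inter> CC) + F (A - CC)" if A: "A \<subseteq> Q" for A
      proof -
        have UX: "\<Union>A \<subseteq> X" using A QX by blast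
        have 1: "f (\<Union>A) = f (\<Union>A \<inter> C) + f (\<Union>A - C)" using sepC UX unfolding sep_def by blast
        have e1: "\<Union>A \<inter> C = \<Union>(A \<inter> CC)"
        proof
          show "\<Union>A \<inter> C \<subseteq> \<Union>(A \<inter> CC)"
          proof
            fix z assume "z \<in> \<Union>A \<inter> C"
            then obtain Y' where Y': "Y' \<in> A" "z \<in> Y'" "z \<in> C" by blast
            then have "Y' \<subseteq> C" using dich[OF C(1), of Y'] A by blast
            then show "z \<in> \<Union>(A \<inter> CC)" using Y' A unfolding CC_def by blast
          qed
          show "\<Union>(A \<inter> CC) \<subseteq> \<Union>A \<inter> C" unfolding CC_def by blast
        qed
        have e2: "\<Union>A - C = \<Union>(A - CC)"
        proof
          show "\<Union>A - C \<subseteq> \<Union>(A - CC)" unfolding CC_def by blast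
          show "\<Union>(A - CC) \<subseteq> \<Union>A - C"
          proof
            fix z assume "z \<in> \<Union>(A - CC)"
            then obtain Y' where Y': "Y' \<in> A" "Y' \<notin> CC" "z \<in> Y'" by blast
            then have "C \<inter> Y' = {}" using dich[OF C(1), of Y'] A unfolding CC_def by blast
            then show "z \<in> \<Union>A - C" using Y' by blast
          qed
        qed
        have "A \<inter> CC \<subseteq> Q" "A - CC \<subseteq> Q" using A by blast+
        then show ?thesis using 1 e1 e2 Fdef A by simp
      qed
      moreover have "CC \<subseteq> Q" unfolding CC_def by blast
      ultimately show ?thesis unfolding sep_def by blast
    qed
    have ZCC: "Z \<subseteq> CC" using atom_sep_cases[OF atZ sepCC] YZ YCC by blast
    have UZC: "\<Union>Z \<subseteq> C" using ZCC unfolding CC_def by blast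
    have RIC: "RI C f" using RIf[OF C(1)] .
    show "RI Z F" unfolding RI_def
    proof (intro allI impI)
      fix A B A' B'
      assume h: "A \<subseteq> Z \<and> B \<subseteq> Z \<and> A \<inter> B = {} \<and> F (A \<union> B) = F A + F B"
        and h2: "A' \<subseteq> A \<and> B' \<subseteq> B"
      have AQ: "A \<subseteq> Q" "B \<subseteq> Q" "A' \<subseteq> Q" "B' \<subseteq> Q" "A \<union> B \<subseteq> Q" "A' \<union> B' \<subseteq> Q"
        using h h2 ZQ by blast+
      have s1: "\<Union>A \<subseteq> C" "\<Union>B \<subseteq> C" using h UZC by blast+
      have s2: "\<Union>A \<inter> \<Union>B = {}"
      proof (rule ccontr)
        assume "\<Union>A \<inter> \<Union>B \<noteq> {}"
        then obtain z Y1 Y2 where z: "Y1 \<in> A" "Y2 \<in> B" "z \<in> Y1" "z \<in> Y2" by blast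
        have "Y1 \<noteq> Y2" using h z by blast
        then have "Y1 \<inter> Y2 = {}" using Qdisj AQ z by blast
        then show False using z by blast
      qed
      have s3: "f (\<Union>A \<union> \<Union>B) = f (\<Union>A) + f (\<Union>B)"
        using h Fdef[OF AQ(5)] Fdef[OF AQ(1)] Fdef[OF AQ(2)] by simp
      have s4: "\<Union>A' \<subseteq> \<Union>A" "\<Union>B' \<subseteq> \<Union>B" using h2 by blast+
      have "f (\<Union>A' \<union> \<Union>B') = f (\<Union>A') + f (\<Union>B')"
        using RIC[unfolded RI_def, rule_format, of "\<Union>A" "\<Union>B" "\<Union>A'" "\<Union>B'"] s1 s2 s3 s4 by blast
      then show "F (A' \<union> B') = F A' + F B'"
        using Fdef[OF AQ(6)] Fdef[OF AQ(3)] Fdef[OF AQ(4)] by simp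
    qed
  qed
  then show ?thesis unfolding F_def[symmetric] Q_def[symmetric] using rigid_iff[of Q F, OF finQ F0] by blast
qed


theorem lemma4p11:
  shows "(\<forall>X Y (f :: 'a set \<Rightarrow> int) g.
            finite X \<and> finite Y \<and> X \<inter> Y = {} \<and> Bool X f \<and> Bool Y g \<longrightarrow>
            (rigid (X \<union> Y) (star1 X Y f g) \<longleftrightarrow> rigid X f \<and> rigid Y g))
       \<and> (\<forall>X Y (f :: 'a set \<Rightarrow> int).
            finite X \<and> Bool X f \<and> rigid X f \<and> Y \<subseteq> X \<longrightarrow> rigid Y (restr f Y))
       \<and> (\<forall>X (f :: 'a set \<Rightarrow> int) r.
            finite X \<and> Bool X f \<and> rigid X f \<and> r \<in> EW X f \<longrightarrow>
            rigid (X // r) (quot_fun X f r))"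
proof (intro conjI allI impI)
  fix X Y :: "'a set" and f g :: "'a set \<Rightarrow> int"
  assume h: "finite X \<and> finite Y \<and> X \<inter> Y = {} \<and> Bool X f \<and> Bool Y g"
  then have h1: "finite X" "finite Y" "X \<inter> Y = {}" "Bool X f" "Bool Y g" by auto
  show "rigid (X \<union> Y) (star1 X Y f g) \<longleftrightarrow> rigid X f \<and> rigid Y g" by (rule part1[OF h1])
next
  fix X Y :: "'a set" and f :: "'a set \<Rightarrow> int"
  assume h: "finite X \<and> Bool X f \<and> rigid X f \<and> Y \<subseteq> X"
  then have h1: "finite X" "Bool X f" "rigid X f" "Y \<subseteq> X" by auto
  show "rigid Y (restr f Y)" by (rule part2[OF h1])
next
  fix X :: "'a set" and f :: "'a set \<Rightarrow> int" and r
  assume h: "finite X \<and> Bool X f \<and> rigid X f \<and> r \<in> EW X f"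
  then have h1: "finite X" "Bool X f" "rigid X f" "r \<in> EW X f" by auto
  show "rigid (X // r) (quot_fun X f r)" by (rule part3[OF h1])
qed

end
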